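(* Let $\llbracket\cdot\rrbracket$ be an interpretation of types, let $\rho$ be a type and $i\le i'$ in $I_\rho$. (1) If $\rho\in\mathrm{Type}^+$, then the factor system $(\llbracket\rho\rrbracket_i)_{i\in I_\rho}$ is direct, and for all $a\in\llbracket\rho\rrbracket$, $a_i\in\llbracket\rho\rrbracket_i$: $a\triangleright a_i$ implies $a\triangleright emb_{i,i'}(a_i)$. (2) If $\rho\in\mathrm{Type}^-$, then the factor system $(\llbracket\rho\rrbracket_i)_{i\in I_\rho}$ is inverse, and for all $a\in\llbracket\rho\rrbracket$, $a_{i'}\in\llbracket\rho\rrbracket_{i'}$: $a\triangleright a_{i'}$ implies $a\triangleright proj_{i',i}(a_{i'})$.
   Context: Systems and factor systems: for a non-empty directed preordered set $I$, a system consists of pairwise disjoint sets $M_i$ ($i\in I$) and relations $\triangleright\subseteq M_{i'}\times M_i$ ($i\le i'$), reflexive for $i=i'$; $a_i\approx b_j$ iff some $c\in M_{i'}$, $i'\ge i,j$, has $c\triangleright a_i,c\triangleright b_j$; prefactor system: $a_{i'}\approx a_i\iff a_{i'}\triangleright a_i$. A factor system is a prefactor system with $\approx$-preserving $emb_{i,i'}:M_i\to M_{i'}$, $proj_{i',i}:M_{i'}\to M_i$ with $emb_{i,i}(a)\approx a$, $proj_{i,i}(a)\approx a$, $emb_{i',i''}\circ emb_{i,i'}(a)\approx emb_{i,i''}(a)$, $proj_{i',i}\circ proj_{i'',i'}(a)\approx proj_{i'',i}(a)$, $proj_{i',i}(emb_{i,i'}(a))\approx a$, and $a_{i'}\triangleright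 a_i\Rightarrow emb_{i',i''}(a_{i'})\triangleright a_i$, $a_{i''}\triangleright a_i\Rightarrow proj_{i'',i'}(a_{i''})\triangleright a_i$ ($i\le i'\le i''$). It is direct iff $a_{i'}\triangleright a_i\iff a_{i'}\approx emb_{i,i'}(a_i)$, inverse iff $a_{i'}\triangleright a_i\iff proj_{i',i}(a_{i'})\approx a_i$. Filters: for each such $I$ a family $\mathcal F(I)$ of cofinal subsets, closed under supersets and finite intersections, containing all non-empty up-sets; standing Condition (D): $H\in\mathcal F(I\times J)$, $I'\in\mathcal F(I)$ imply $\{j\mid\exists i\in I',(i,j)\in H\}\in\mathcal F(J)$. A target for $M_I$: a set $M$ with relation $a\triangleright a_i$ such that $\{i\mid\exists a_i,a\triangleright a_i\}\in\mathcal F(I)$ and $a\triangleright a_{i'},a\triangleright a_i\Rightarrow a_{i'}\triangleright a_i$; a limit is a target $M$ such that for every target $N$ there is a unique $\Phi:N\to M$ with $b\triangleright a_i\Rightarrow\Phi(b)\triangleright a_i$. Function space of factor systems $[M_I\to N_J]$: indices $i\to j\in I\times J$, states = $\approx$-preserving functions $M_i\to N_j$, $f'\triangleright f$ iff $a_{i'}\triangleright a_i\Rightarrow f'(a_{i'})\triangleright f(a_i)$, embeddings $f\mapsto emb_{j,j'}\circ f\circ proj_{i',i}$, projections $f'\mapsto proj_{j',j}\circ f'\circ emb_{i,i'}$. For targets $M,N$: $[M\to_{\mathcal F}N]=\{f:M\to N\mid I_f\in\mathcal F(I\times J)\}$ with $f\triangleright f_{i\to j}$ iff $a\triangleright a_i\Rightarrow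 f(a)\triangleright f_{i\to j}(a_i)$ for all $a\in M,a_i\in M_i$, and $I_f=\{i\to j\mid\exists f_{i\to j},f\triangleright f_{i\to j}\}$. Types: $\rho::=\iota\mid\rho\to\rho$ over base types $\iota$, one of which is $\mathsf{prop}$. Positive and negative types: $\mathrm{Type}^+\ni\rho^+::=\iota\mid\rho^-\to\rho^+$ and $\mathrm{Type}^-\ni\rho^-::=\mathsf{prop}\mid\rho^+\to\rho^-$ ($\iota$ any base type). Each type has a non-empty directed index set $I_\rho$, with $I_{\mathsf{prop}}=\{\mathsf{prop}\}$ and $I_{\rho\to\sigma}=I_\rho\times I_\sigma$. An interpretation of types assigns to each type $\rho$ a factor system $(\llbracket\rho\rrbracket_i)_{i\in I_\rho}$ and a limit $\llbracket\rho\rrbracket$ of it (with relation $a\triangleright a_i$), such that: for each base type $\iota$ the factor system is direct; $\mathsf{prop}$ is interpreted by the one-index factor system with state $\{true,false\}$ (relations are equality) and limit $\{true,false\}$ (with $b\triangleright b'\iff b=b'$); $\rho\to\sigma$ is interpreted by the function-space factor system $[(\llbracket\rho\rrbracket_i)_{i}\to(\llbracket\sigma\rrbracket_j)_{j}]$ with limit $[\llbracket\rho\rrbracket\to_{\mathcal F}\llbracket\sigma\rrbracket]$. *)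

theory Defs
  imports Main "HOL-Library.FuncSet"
begin

text \<open>Index universe: indices of base types are drawn from 'a, the single index of
  prop is IProp, and an index of an arrow type is a pair IPair i j.\<close>
datatype 'a ix = IProp | IBase 'a | IPair "'a ix" "'a ix"

definition directed_preorder :: "'i set \<Rightarrow> ('i \<Rightarrow> 'i \<Rightarrow> bool) \<Rightarrow> bool" where
  "directed_preorder I le \<longleftrightarrow>
     I \<noteq> {} \<and> (\<forall>i\<in>I. le i i) \<and>
     (\<forall>i\<in>I. \<forall>j\<in>I. \<forall>k\<in>I. le i j \<and> le j k \<longrightarrow> le i k) \<and>
     (\<forall>i\<in>I. \<forall>j\<in>I. \<exists>k\<in>I. le i k \<and> le j k)"

definition cofinal :: "'i set \<Rightarrow> ('i \<Rightarrow> 'i \<Rightarrow> bool) \<Rightarrow> 'i set \<Rightarrow> bool" where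
  "cofinal I le H \<longleftrightarrow> H \<subseteq> I \<and> (\<forall>i\<in>I. \<exists>h\<in>H. le i h)"

definition upset :: "'i set \<Rightarrow> ('i \<Rightarrow> 'i \<Rightarrow> bool) \<Rightarrow> 'i set \<Rightarrow> bool" where
  "upset I le U \<longleftrightarrow> U \<subseteq> I \<and> (\<forall>u\<in>U. \<forall>i\<in>I. le u i \<longrightarrow> i \<in> U)"

fun pair_le :: "('a ix \<Rightarrow> 'a ix \<Rightarrow> bool) \<Rightarrow> ('a ix \<Rightarrow> 'a ix \<Rightarrow> bool) \<Rightarrow> 'a ix \<Rightarrow> 'a ix \<Rightarrow> bool" where
  "pair_le le1 le2 (IPair i j) (IPair i' j') = (le1 i i' \<and> le2 j j')"
| "pair_le le1 le2 _ _ = False"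

definition pair_set :: "'a ix set \<Rightarrow> 'a ix set \<Rightarrow> 'a ix set" where
  "pair_set I J = {IPair i j | i j. i \<in> I \<and> j \<in> J}"

definition filter_assignment :: "('a ix set \<Rightarrow> ('a ix \<Rightarrow> 'a ix \<Rightarrow> bool) \<Rightarrow> 'a ix set set) \<Rightarrow> bool" where
  "filter_assignment F \<longleftrightarrow>
     (\<forall>I le. directed_preorder I le \<longrightarrow>
        (\<forall>H\<in>F I le. cofinal I le H) \<and>
        (\<forall>H\<in>F I le. \<forall>H'. H \<subseteq> H' \<and> H' \<subseteq> I \<longrightarrow> H' \<in> F I le) \<and>
        (\<forall>H\<in>F I le. \<forall>H'\<in>F I le. H \<inter> H' \<in> F I le) \<and>
        (\<forall>U. U \<noteq> {} \<and> upset I le U \<longrightarrow> U \<in> F I le))"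

definition condition_D :: "('a ix set \<Rightarrow> ('a ix \<Rightarrow> 'a ix \<Rightarrow> bool) \<Rightarrow> 'a ix set set) \<Rightarrow> bool" where
  "condition_D F \<longleftrightarrow>
     (\<forall>I leI J leJ H I'. directed_preorder I leI \<and> directed_preorder J leJ \<and>
        H \<in> F (pair_set I J) (pair_le leI leJ) \<and> I' \<in> F I leI \<longrightarrow>
        {j\<in>J. \<exists>i\<in>I'. IPair i j \<in> H} \<in> F J leJ)"

text \<open>States carry their index explicitly: M i is the set of states at index i,
  tr i' i a b means a_{i'} \<triangleright> b_i (only relevant for i \<le> i', a \<in> M i', b \<in> M i).
  This is the disjoint-union presentation of a system.\<close>

definition sim :: "'i set \<Rightarrow> ('i \<Rightarrow> 'i \<Rightarrow> bool) \<Rightarrow> ('i \<Rightarrow> 'v set) \<Rightarrow>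
    ('i \<Rightarrow> 'i \<Rightarrow> 'v \<Rightarrow> 'v \<Rightarrow> bool) \<Rightarrow> 'i \<Rightarrow> 'v \<Rightarrow> 'i \<Rightarrow> 'v \<Rightarrow> bool" where
  "sim I le M tr i a j b \<longleftrightarrow>
     (\<exists>k\<in>I. le i k \<and> le j k \<and> (\<exists>c\<in>M k. tr k i c a \<and> tr k j c b))"

definition system :: "'i set \<Rightarrow> ('i \<Rightarrow> 'i \<Rightarrow> bool) \<Rightarrow> ('i \<Rightarrow> 'v set) \<Rightarrow>
    ('i \<Rightarrow> 'i \<Rightarrow> 'v \<Rightarrow> 'v \<Rightarrow> bool) \<Rightarrow> bool" where
  "system I le M tr \<longleftrightarrow> directed_preorder I le \<and> (\<forall>i\<in>I. \<forall>a\<in>M i. tr i i a a)"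

definition prefactor_system :: "'i set \<Rightarrow> ('i \<Rightarrow> 'i \<Rightarrow> bool) \<Rightarrow> ('i \<Rightarrow> 'v set) \<Rightarrow>
    ('i \<Rightarrow> 'i \<Rightarrow> 'v \<Rightarrow> 'v \<Rightarrow> bool) \<Rightarrow> bool" where
  "prefactor_system I le M tr \<longleftrightarrow> system I le M tr \<and>
     (\<forall>i\<in>I. \<forall>i'\<in>I. le i i' \<longrightarrow>
        (\<forall>a'\<in>M i'. \<forall>a\<in>M i. sim I le M tr i' a' i a \<longleftrightarrow> tr i' i a' a))"

definition factor_system :: "'i set \<Rightarrow> ('i \<Rightarrow> 'i \<Rightarrow> bool) \<Rightarrow> ('i \<Rightarrow> 'v set) \<Rightarrow>
    ('i \<Rightarrow> 'i \<Rightarrow> 'v \<Rightarrow> 'v \<Rightarrow> bool) \<Rightarrow> ('i \<Rightarrow> 'i \<Rightarrow> 'v \<Rightarrow> 'v) \<Rightarrow> ('i \<Rightarrow> 'i \<Rightarrow> 'v \<Rightarrow> 'v) \<Rightarrow> bool" where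
  "factor_system I le M tr emb prj \<longleftrightarrow> prefactor_system I le M tr \<and>
     (\<forall>i\<in>I. \<forall>i'\<in>I. le i i' \<longrightarrow>
        (\<forall>a\<in>M i. emb i i' a \<in> M i') \<and>
        (\<forall>a\<in>M i'. prj i' i a \<in> M i) \<and>
        (\<forall>a\<in>M i. \<forall>b\<in>M i. sim I le M tr i a i b \<longrightarrow> sim I le M tr i' (emb i i' a) i' (emb i i' b)) \<and>
        (\<forall>a\<in>M i'. \<forall>b\<in>M i'. sim I le M tr i' a i' b \<longrightarrow> sim I le M tr i (prj i' i a) i (prj i' i b)) \<and>
        (\<forall>a\<in>M i. sim I le M tr i (prj i' i (emb i i' a)) i a)) \<and>
     (\<forall>i\<in>I. \<forall>a\<in>M i. sim I le M tr i (emb i i a) i a \<and> sim I le M tr i (prj i i a) i a) \<and>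
     (\<forall>i\<in>I. \<forall>i'\<in>I. \<forall>i''\<in>I. le i i' \<and> le i' i'' \<longrightarrow>
        (\<forall>a\<in>M i. sim I le M tr i'' (emb i' i'' (emb i i' a)) i'' (emb i i'' a)) \<and>
        (\<forall>a\<in>M i''. sim I le M tr i (prj i' i (prj i'' i' a)) i (prj i'' i a)) \<and>
        (\<forall>a\<in>M i'. \<forall>b\<in>M i. tr i' i a b \<longrightarrow> tr i'' i (emb i' i'' a) b) \<and>
        (\<forall>a\<in>M i''. \<forall>b\<in>M i. tr i'' i a b \<longrightarrow> tr i' i (prj i'' i' a) b))"

definition direct :: "'i set \<Rightarrow> ('i \<Rightarrow> 'i \<Rightarrow> bool) \<Rightarrow> ('i \<Rightarrow> 'v set) \<Rightarrow>
    ('i \<Rightarrow> 'i \<Rightarrow> 'v \<Rightarrow> 'v \<Rightarrow> bool) \<Rightarrow> ('i \<Rightarrow> 'i \<Rightarrow> 'v \<Rightarrow> 'v) \<Rightarrow> ('i \<Rightarrow> 'i \<Rightarrow> 'v \<Rightarrow> 'v) \<Rightarrow> bool" where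
  "direct I le M tr emb prj \<longleftrightarrow> factor_system I le M tr emb prj \<and>
     (\<forall>i\<in>I. \<forall>i'\<in>I. le i i' \<longrightarrow>
        (\<forall>a'\<in>M i'. \<forall>a\<in>M i. tr i' i a' a \<longleftrightarrow> sim I le M tr i' a' i' (emb i i' a)))"

definition inverse_fs :: "'i set \<Rightarrow> ('i \<Rightarrow> 'i \<Rightarrow> bool) \<Rightarrow> ('i \<Rightarrow> 'v set) \<Rightarrow>
    ('i \<Rightarrow> 'i \<Rightarrow> 'v \<Rightarrow> 'v \<Rightarrow> bool) \<Rightarrow> ('i \<Rightarrow> 'i \<Rightarrow> 'v \<Rightarrow> 'v) \<Rightarrow> ('i \<Rightarrow> 'i \<Rightarrow> 'v \<Rightarrow> 'v) \<Rightarrow> bool" where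
  "inverse_fs I le M tr emb prj \<longleftrightarrow> factor_system I le M tr emb prj \<and>
     (\<forall>i\<in>I. \<forall>i'\<in>I. le i i' \<longrightarrow>
        (\<forall>a'\<in>M i'. \<forall>a\<in>M i. tr i' i a' a \<longleftrightarrow> sim I le M tr i (prj i' i a') i a))"

text \<open>ntr a i x means a \<triangleright> x_i for a target element a and a state x at index i.\<close>
definition target :: "('i set \<Rightarrow> ('i \<Rightarrow> 'i \<Rightarrow> bool) \<Rightarrow> 'i set set) \<Rightarrow>
    'i set \<Rightarrow> ('i \<Rightarrow> 'i \<Rightarrow> bool) \<Rightarrow> ('i \<Rightarrow> 'v set) \<Rightarrow> ('i \<Rightarrow> 'i \<Rightarrow> 'v \<Rightarrow> 'v \<Rightarrow> bool) \<Rightarrow>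
    'w set \<Rightarrow> ('w \<Rightarrow> 'i \<Rightarrow> 'v \<Rightarrow> bool) \<Rightarrow> bool" where
  "target F I le M tr N ntr \<longleftrightarrow>
     (\<forall>a\<in>N. \<forall>i x. ntr a i x \<longrightarrow> i \<in> I \<and> x \<in> M i) \<and>
     (\<forall>a\<in>N. {i\<in>I. \<exists>x\<in>M i. ntr a i x} \<in> F I le) \<and>
     (\<forall>a\<in>N. \<forall>i\<in>I. \<forall>i'\<in>I. le i i' \<longrightarrow>
        (\<forall>x'\<in>M i'. \<forall>x\<in>M i. ntr a i' x' \<and> ntr a i x \<longrightarrow> tr i' i x' x))"

definition is_limit :: "('i set \<Rightarrow> ('i \<Rightarrow> 'i \<Rightarrow> bool) \<Rightarrow> 'i set set) \<Rightarrow>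
    'i set \<Rightarrow> ('i \<Rightarrow> 'i \<Rightarrow> bool) \<Rightarrow> ('i \<Rightarrow> 'v set) \<Rightarrow> ('i \<Rightarrow> 'i \<Rightarrow> 'v \<Rightarrow> 'v \<Rightarrow> bool) \<Rightarrow>
    'v set \<Rightarrow> ('v \<Rightarrow> 'i \<Rightarrow> 'v \<Rightarrow> bool) \<Rightarrow> bool" where
  "is_limit F I le M tr L ltr \<longleftrightarrow> target F I le M tr L ltr \<and>
     (\<forall>(N::'v set) ntr. target F I le M tr N ntr \<longrightarrow>
        (\<exists>\<Phi>. \<Phi> \<in> N \<rightarrow> L \<and> (\<forall>b\<in>N. \<forall>i x. ntr b i x \<longrightarrow> ltr (\<Phi> b) i x) \<and>
           (\<forall>\<Psi>. \<Psi> \<in> N \<rightarrow> L \<and> (\<forall>b\<in>N. \<forall>i x. ntr b i x \<longrightarrow> ltr (\<Psi> b) i x) \<longrightarrow>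
              (\<forall>b\<in>N. \<Psi> b = \<Phi> b))))"

datatype 'b sty = Prop | Base 'b | Arr "'b sty" "'b sty"

fun pos_ty :: "'b sty \<Rightarrow> bool" and neg_ty :: "'b sty \<Rightarrow> bool" where
  "pos_ty Prop = True"
| "pos_ty (Base b) = True"
| "pos_ty (Arr r s) = (neg_ty r \<and> pos_ty s)"
| "neg_ty Prop = True"
| "neg_ty (Base b) = False"
| "neg_ty (Arr r s) = (pos_ty r \<and> neg_ty s)"

fun Idx :: "('b \<Rightarrow> 'a set) \<Rightarrow> 'b sty \<Rightarrow> 'a ix set" where
  "Idx ib Prop = {IProp}"
| "Idx ib (Base b) = IBase ` ib b"
| "Idx ib (Arr r s) = pair_set (Idx ib r) (Idx ib s)"

fun base_le :: "('a \<Rightarrow> 'a \<Rightarrow> bool) \<Rightarrow> 'a ix \<Rightarrow> 'a ix \<Rightarrow> bool" where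
  "base_le le (IBase x) (IBase y) = le x y"
| "base_le le _ _ = False"

fun Le :: "('b \<Rightarrow> 'a \<Rightarrow> 'a \<Rightarrow> bool) \<Rightarrow> 'b sty \<Rightarrow> 'a ix \<Rightarrow> 'a ix \<Rightarrow> bool" where
  "Le leb Prop = (\<lambda>i j. i = IProp \<and> j = IProp)"
| "Le leb (Base b) = base_le (leb b)"
| "Le leb (Arr r s) = pair_le (Le leb r) (Le leb s)"

text \<open>All states and limit elements live in one universe 'v; an element v encodes a
  function via app v (restricted to the relevant domain). Functions between state sets
  and between limits are represented faithfully via bijective encodings.\<close>
record ('a, 'b, 'v) interp =
  ib  :: "'b \<Rightarrow> 'a set"
  leb :: "'b \<Rightarrow> 'a \<Rightarrow> 'a \<Rightarrow> bool"
  st  :: "'b sty \<Rightarrow> 'a ix \<Rightarrow> 'v set"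
  tr  :: "'b sty \<Rightarrow> 'a ix \<Rightarrow> 'a ix \<Rightarrow> 'v \<Rightarrow> 'v \<Rightarrow> bool"
  emb :: "'b sty \<Rightarrow> 'a ix \<Rightarrow> 'a ix \<Rightarrow> 'v \<Rightarrow> 'v"
  prj :: "'b sty \<Rightarrow> 'a ix \<Rightarrow> 'a ix \<Rightarrow> 'v \<Rightarrow> 'v"
  lim :: "'b sty \<Rightarrow> 'v set"
  ltr :: "'b sty \<Rightarrow> 'v \<Rightarrow> 'a ix \<Rightarrow> 'v \<Rightarrow> bool"
  app :: "'v \<Rightarrow> 'v \<Rightarrow> 'v"
  tt  :: 'v
  ff  :: 'v

abbreviation I\<^sub>T where "I\<^sub>T J \<rho> \<equiv> Idx (ib J) \<rho>"
abbreviation le\<^sub>T where "le\<^sub>T J \<rho> \<equiv> Le (leb J) \<rho>"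
abbreviation sim\<^sub>T where "sim\<^sub>T J \<rho> \<equiv> sim (I\<^sub>T J \<rho>) (le\<^sub>T J \<rho>) (st J \<rho>) (tr J \<rho>)"

definition sim_pres :: "('a, 'b, 'v, 'z) interp_scheme \<Rightarrow> 'b sty \<Rightarrow> 'b sty \<Rightarrow> 'a ix \<Rightarrow> 'a ix \<Rightarrow> ('v \<Rightarrow> 'v) set" where
  "sim_pres J r s i j = {f \<in> st J r i \<rightarrow>\<^sub>E st J s j.
      \<forall>a\<in>st J r i. \<forall>b\<in>st J r i. sim\<^sub>T J r i a i b \<longrightarrow> sim\<^sub>T J s j (f a) j (f b)}"

definition fs_ltr :: "('a, 'b, 'v, 'z) interp_scheme \<Rightarrow> 'b sty \<Rightarrow> 'b sty \<Rightarrow> ('v \<Rightarrow> 'v) \<Rightarrow> 'a ix \<Rightarrow> 'a ix \<Rightarrow> 'v \<Rightarrow> bool" where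
  "fs_ltr J r s f i j g \<longleftrightarrow>
     (\<forall>a\<in>lim J r. \<forall>x\<in>st J r i. ltr J r a i x \<longrightarrow> ltr J s (f a) j (app J g x))"

definition fs_Ind :: "('a, 'b, 'v, 'z) interp_scheme \<Rightarrow> 'b sty \<Rightarrow> 'b sty \<Rightarrow> ('v \<Rightarrow> 'v) \<Rightarrow> 'a ix set" where
  "fs_Ind J r s f = {IPair i j | i j. i \<in> I\<^sub>T J r \<and> j \<in> I\<^sub>T J s \<and>
      (\<exists>g\<in>st J (Arr r s) (IPair i j). fs_ltr J r s f i j g)}"

definition interpretation_of_types ::
  "('a ix set \<Rightarrow> ('a ix \<Rightarrow> 'a ix \<Rightarrow> bool) \<Rightarrow> 'a ix set set) \<Rightarrow> ('a, 'b, 'v, 'z) interp_scheme \<Rightarrow> bool" where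
  "interpretation_of_types F J \<longleftrightarrow>
     \<comment> \<open>every type gets a factor system over its index set, and a limit of it\<close>
     (\<forall>b. directed_preorder (ib J b) (leb J b)) \<and>
     (\<forall>\<rho>. factor_system (I\<^sub>T J \<rho>) (le\<^sub>T J \<rho>) (st J \<rho>) (tr J \<rho>) (emb J \<rho>) (prj J \<rho>)) \<and>
     (\<forall>\<rho>. is_limit F (I\<^sub>T J \<rho>) (le\<^sub>T J \<rho>) (st J \<rho>) (tr J \<rho>) (lim J \<rho>) (ltr J \<rho>)) \<and>
     \<comment> \<open>base types are direct\<close>
     (\<forall>b. direct (I\<^sub>T J (Base b)) (le\<^sub>T J (Base b)) (st J (Base b)) (tr J (Base b))
                 (emb J (Base b)) (prj J (Base b))) \<and>
     \<comment> \<open>prop\<close>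
     tt J \<noteq> ff J \<and>
     st J Prop IProp = {tt J, ff J} \<and>
     (\<forall>a\<in>{tt J, ff J}. \<forall>b\<in>{tt J, ff J}. tr J Prop IProp IProp a b \<longleftrightarrow> a = b) \<and>
     lim J Prop = {tt J, ff J} \<and>
     (\<forall>a\<in>{tt J, ff J}. \<forall>i x. ltr J Prop a i x \<longleftrightarrow> i = IProp \<and> x \<in> {tt J, ff J} \<and> a = x) \<and>
     \<comment> \<open>arrow types: the function-space factor system\<close>
     (\<forall>r s. \<forall>i\<in>I\<^sub>T J r. \<forall>j\<in>I\<^sub>T J s.
        bij_betw (\<lambda>v. restrict (app J v) (st J r i)) (st J (Arr r s) (IPair i j)) (sim_pres J r s i j)) \<and>
     (\<forall>r s. \<forall>i\<in>I\<^sub>T J r. \<forall>i'\<in>I\<^sub>T J r. \<forall>j\<in>I\<^sub>T J s. \<forall>j'\<in>I\<^sub>T J s.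
        le\<^sub>T J r i i' \<and> le\<^sub>T J s j j' \<longrightarrow>
        (\<forall>f'\<in>st J (Arr r s) (IPair i' j'). \<forall>f\<in>st J (Arr r s) (IPair i j).
           tr J (Arr r s) (IPair i' j') (IPair i j) f' f \<longleftrightarrow>
           (\<forall>a'\<in>st J r i'. \<forall>a\<in>st J r i. tr J r i' i a' a \<longrightarrow> tr J s j' j (app J f' a') (app J f a))) \<and>
        (\<forall>f\<in>st J (Arr r s) (IPair i j).
           emb J (Arr r s) (IPair i j) (IPair i' j') f \<in> st J (Arr r s) (IPair i' j') \<and>
           (\<forall>a\<in>st J r i'. app J (emb J (Arr r s) (IPair i j) (IPair i' j') f) a
                            = emb J s j j' (app J f (prj J r i' i a)))) \<and>
        (\<forall>f'\<in>st J (Arr r s) (IPair i' j').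
           prj J (Arr r s) (IPair i' j') (IPair i j) f' \<in> st J (Arr r s) (IPair i j) \<and>
           (\<forall>a\<in>st J r i. app J (prj J (Arr r s) (IPair i' j') (IPair i j) f') a
                            = prj J s j' j (app J f' (emb J r i i' a))))) \<and>
     \<comment> \<open>arrow types: the limit [M \<rightarrow>_F N]\<close>
     (\<forall>r s. bij_betw (\<lambda>v. restrict (app J v) (lim J r)) (lim J (Arr r s))
              {f \<in> lim J r \<rightarrow>\<^sub>E lim J s. fs_Ind J r s f \<in> F (I\<^sub>T J (Arr r s)) (le\<^sub>T J (Arr r s))}) \<and>
     (\<forall>r s. \<forall>v\<in>lim J (Arr r s). \<forall>k g. ltr J (Arr r s) v k g \<longleftrightarrow>
        (\<exists>i j. k = IPair i j \<and> i \<in> I\<^sub>T J r \<and> j \<in> I\<^sub>T J s \<and>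
               g \<in> st J (Arr r s) (IPair i j) \<and> fs_ltr J r s (app J v) i j g))"

end

theory Submission imports Defs begin

locale fsys =
  fixes I :: "'a ix set" and le :: "'a ix \<Rightarrow> 'a ix \<Rightarrow> bool" and M :: "'a ix \<Rightarrow> 'v set"
    and T :: "'a ix \<Rightarrow> 'a ix \<Rightarrow> 'v \<Rightarrow> 'v \<Rightarrow> bool" and E :: "'a ix \<Rightarrow> 'a ix \<Rightarrow> 'v \<Rightarrow> 'v" and P :: "'a ix \<Rightarrow> 'a ix \<Rightarrow> 'v \<Rightarrow> 'v"
  assumes fs: "factor_system I le M T E P"
begin

abbreviation "sm \<equiv> sim I le M T"

lemma dp: "directed_preorder I le"
  using fs unfolding factor_system_def prefactor_system_def system_def by auto
lemma le_refl: "i\<in>I \<Longrightarrow> le i i" using dp unfolding directed_preorder_def by blast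
lemma le_trans: "i\<in>I \<Longrightarrow> j\<in>I \<Longrightarrow> k\<in>I \<Longrightarrow> le i j \<Longrightarrow> le j k \<Longrightarrow> le i k"
  using dp unfolding directed_preorder_def by blast
lemma upper: "i\<in>I \<Longrightarrow> j\<in>I \<Longrightarrow> \<exists>k\<in>I. le i k \<and> le j k"
  using dp unfolding directed_preorder_def by blast
lemma T_refl: "i\<in>I \<Longrightarrow> a\<in>M i \<Longrightarrow> T i i a a"
  using fs unfolding factor_system_def prefactor_system_def system_def by auto
lemma pre: "i\<in>I \<Longrightarrow> i'\<in>I \<Longrightarrow> le i i' \<Longrightarrow> a'\<in>M i' \<Longrightarrow> a\<in>M i \<Longrightarrow> sm i' a' i a \<longleftrightarrow> T i' i a' a"
  using fs unfolding factor_system_def prefactor_system_def by auto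
lemma sim_same: "i\<in>I \<Longrightarrow> a\<in>M i \<Longrightarrow> b\<in>M i \<Longrightarrow> sm i a i b \<longleftrightarrow> T i i a b"
  using pre le_refl by blast
lemma sim_sym: "sm i a j b \<Longrightarrow> sm j b i a"
  unfolding sim_def by blast
lemma sim_refl: "i\<in>I \<Longrightarrow> a\<in>M i \<Longrightarrow> sm i a i a"
  using sim_same T_refl by blast
lemma sim_trans: "i\<in>I \<Longrightarrow> a\<in>M i \<Longrightarrow> b\<in>M i \<Longrightarrow> c\<in>M i \<Longrightarrow> sm i a i b \<Longrightarrow> sm i b i c \<Longrightarrow> sm i a i c"
proof -
  assume h: "i\<in>I" "a\<in>M i" "b\<in>M i" "c\<in>M i" "sm i a i b" "sm i b i c"
  then have "T i i b a" "T i i b c" using sim_same sim_sym by blast+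
  then show "sm i a i c" unfolding sim_def using h le_refl by blast
qed

lemma emb_in: "i\<in>I \<Longrightarrow> i'\<in>I \<Longrightarrow> le i i' \<Longrightarrow> a\<in>M i \<Longrightarrow> E i i' a \<in> M i'"
  using fs unfolding factor_system_def by auto
lemma prj_in: "i\<in>I \<Longrightarrow> i'\<in>I \<Longrightarrow> le i i' \<Longrightarrow> a\<in>M i' \<Longrightarrow> P i' i a \<in> M i"
  using fs unfolding factor_system_def by auto
lemma emb_sim: "i\<in>I \<Longrightarrow> i'\<in>I \<Longrightarrow> le i i' \<Longrightarrow> a\<in>M i \<Longrightarrow> b\<in>M i \<Longrightarrow> sm i a i b \<Longrightarrow> sm i' (E i i' a) i' (E i i' b)"
  using fs unfolding factor_system_def by auto
lemma prj_sim: "i\<in>I \<Longrightarrow> i'\<in>I \<Longrightarrow> le i i' \<Longrightarrow> a\<in>M i' \<Longrightarrow> b\<in>M i' \<Longrightarrow> sm i' a i' b \<Longrightarrow> sm i (P i' i a) i (P i' i b)"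
  using fs unfolding factor_system_def by auto
lemma prj_emb: "i\<in>I \<Longrightarrow> i'\<in>I \<Longrightarrow> le i i' \<Longrightarrow> a\<in>M i \<Longrightarrow> sm i (P i' i (E i i' a)) i a"
  using fs unfolding factor_system_def by auto
lemma emb_id: "i\<in>I \<Longrightarrow> a\<in>M i \<Longrightarrow> sm i (E i i a) i a"
  using fs unfolding factor_system_def by auto
lemma prj_id: "i\<in>I \<Longrightarrow> a\<in>M i \<Longrightarrow> sm i (P i i a) i a"
  using fs unfolding factor_system_def by auto
lemma emb_comp: "i\<in>I \<Longrightarrow> i'\<in>I \<Longrightarrow> i''\<in>I \<Longrightarrow> le i i' \<Longrightarrow> le i' i'' \<Longrightarrow> a\<in>M i \<Longrightarrow>
   sm i'' (E i' i'' (E i i' a)) i'' (E i i'' a)"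
  using fs unfolding factor_system_def by auto
lemma prj_comp: "i\<in>I \<Longrightarrow> i'\<in>I \<Longrightarrow> i''\<in>I \<Longrightarrow> le i i' \<Longrightarrow> le i' i'' \<Longrightarrow> a\<in>M i'' \<Longrightarrow>
   sm i (P i' i (P i'' i' a)) i (P i'' i a)"
  using fs unfolding factor_system_def by auto


lemma lim_extend:
  assumes lim: "is_limit F I le M T L R"
    and tgt: "target F I le M T L ntr" and sub: "\<forall>a\<in>L. \<forall>j x. R a j x \<longrightarrow> ntr a j x"
    and aL: "a\<in>L" and n: "ntr a j x"
  shows "R a j x"
proof -
  have tl: "target F I le M T L R" and U: "\<And>(N::'v set) ntr'. target F I le M T N ntr' \<Longrightarrow>
        (\<exists>\<Phi>. \<Phi> \<in> N \<rightarrow> L \<and> (\<forall>b\<in>N. \<forall>i x. ntr' b i x \<longrightarrow> R (\<Phi> b) i x) \<and>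
           (\<forall>\<Psi>. \<Psi> \<in> N \<rightarrow> L \<and> (\<forall>b\<in>N. \<forall>i x. ntr' b i x \<longrightarrow> R (\<Psi> b) i x) \<longrightarrow>
              (\<forall>b\<in>N. \<Psi> b = \<Phi> b)))"
    using lim unfolding is_limit_def by blast+
  obtain \<Phi> where P1: "\<Phi> \<in> L \<rightarrow> L" and P2: "\<forall>b\<in>L. \<forall>i x. ntr b i x \<longrightarrow> R (\<Phi> b) i x"
    using U[OF tgt] by blast
  obtain \<Phi>0 where Q: "\<forall>\<Psi>. \<Psi> \<in> L \<rightarrow> L \<and> (\<forall>b\<in>L. \<forall>i x. R b i x \<longrightarrow> R (\<Psi> b) i x) \<longrightarrow>
              (\<forall>b\<in>L. \<Psi> b = \<Phi>0 b)"
    using U[OF tl] by blast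
  have "\<forall>b\<in>L. id b = \<Phi>0 b" using Q by (metis funcset_id id_apply)
  moreover have "\<forall>b\<in>L. \<Phi> b = \<Phi>0 b"
  proof -
    have "\<forall>b\<in>L. \<forall>i x. R b i x \<longrightarrow> R (\<Phi> b) i x" using P2 sub by blast
    then show ?thesis using Q P1 by blast
  qed
  ultimately have "\<Phi> a = a" using aL by simp
  then show ?thesis using P2 aL n by metis
qed

lemma target_F:
  assumes fa: "filter_assignment F" and tl: "target F I le M T L R"
    and sub: "\<forall>j x. R a j x \<longrightarrow> ntr a j x" and aL: "a \<in> L"
    and wt: "\<forall>j x. ntr a j x \<longrightarrow> j \<in> I \<and> x \<in> M j"
  shows "{j\<in>I. \<exists>x\<in>M j. ntr a j x} \<in> F I le"
proof -
  have H: "{j\<in>I. \<exists>x\<in>M j. R a j x} \<in> F I le" using tl aL unfolding target_def by blast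
  have "\<forall>H\<in>F I le. \<forall>H'. H \<subseteq> H' \<and> H' \<subseteq> I \<longrightarrow> H' \<in> F I le"
    using fa[unfolded filter_assignment_def, THEN spec[of _ I], THEN spec[of _ le], THEN mp, OF dp] by (elim conjE)
  moreover have "{j\<in>I. \<exists>x\<in>M j. R a j x} \<subseteq> {j\<in>I. \<exists>x\<in>M j. ntr a j x}" using sub by blast
  ultimately show ?thesis using H wt by (metis (no_types, lifting) mem_Collect_eq subsetI)
qed

lemma cofinal_ltr:
  assumes fa: "filter_assignment F" and tl: "target F I le M T L R" and aL: "a \<in> L" and m: "m \<in> I"
  shows "\<exists>k\<in>I. le m k \<and> (\<exists>z\<in>M k. R a k z)"
proof -
  have H: "{j\<in>I. \<exists>x\<in>M j. R a j x} \<in> F I le" using tl aL unfolding target_def by blast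
  have "\<forall>H\<in>F I le. cofinal I le H" using fa[unfolded filter_assignment_def, THEN spec[of _ I], THEN spec[of _ le], THEN mp, OF dp] by (elim conjE)
  then have "cofinal I le {j\<in>I. \<exists>x\<in>M j. R a j x}" using H by (rule bspec)
  then have "\<exists>h\<in>{j\<in>I. \<exists>x\<in>M j. R a j x}. le m h" using m unfolding cofinal_def by (elim conjE) (rule bspec)
  then show ?thesis by auto
qed


lemma tcoh:
  assumes tl: "target F I le M T L R" and "a\<in>L" "j\<in>I" "j'\<in>I" "le j j'" "x'\<in>M j'" "x\<in>M j" "R a j' x'" "R a j x"
  shows "T j' j x' x"
  using assms unfolding target_def by blast

lemma twt:
  assumes tl: "target F I le M T L R" and "a\<in>L" "R a j x"
  shows "j\<in>I" "x\<in>M j"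
  using assms unfolding target_def by blast+

lemma dirT:
  assumes "direct I le M T E P" "j\<in>I" "k\<in>I" "le j k" "c\<in>M k" "x\<in>M j"
  shows "T k j c x \<longleftrightarrow> sm k c k (E j k x)"
  using assms unfolding direct_def by blast

lemma invT:
  assumes "inverse_fs I le M T E P" "j\<in>I" "k\<in>I" "le j k" "c\<in>M k" "x\<in>M j"
  shows "T k j c x \<longleftrightarrow> sm j (P k j c) j x"
  using assms unfolding inverse_fs_def by blast

lemma target_intro:
  assumes fa: "filter_assignment F" and tl: "target F I le M T L R"
    and sub: "\<forall>a\<in>L. \<forall>j x. R a j x \<longrightarrow> ntr a j x"
    and wt: "\<forall>a\<in>L. \<forall>j x. ntr a j x \<longrightarrow> j \<in> I \<and> x \<in> M j"
    and coh: "\<And>a j j' x' x. a\<in>L \<Longrightarrow> j\<in>I \<Longrightarrow> j'\<in>I \<Longrightarrow> le j j' \<Longrightarrow> x'\<in>M j' \<Longrightarrow> x\<in>M j \<Longrightarrow>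
        ntr a j' x' \<Longrightarrow> ntr a j x \<Longrightarrow> T j' j x' x"
  shows "target F I le M T L ntr"
proof -
  have "\<forall>a\<in>L. {j\<in>I. \<exists>x\<in>M j. ntr a j x} \<in> F I le"
  proof
    fix a assume aL: "a\<in>L"
    show "{j\<in>I. \<exists>x\<in>M j. ntr a j x} \<in> F I le"
      by (rule target_F[OF fa tl]) (use sub wt aL in auto)
  qed
  then show ?thesis unfolding target_def using wt coh by blast
qed

lemma lim_direct:
  assumes fa: "filter_assignment F" and dir: "direct I le M T E P" and lim: "is_limit F I le M T L R"
    and ii: "i\<in>I" "i'\<in>I" "le i i'" and a0: "a0\<in>L" "x0\<in>M i" "R a0 i x0"
  shows "R a0 i' (E i i' x0)"
proof -
  have tl: "target F I le M T L R" using lim unfolding is_limit_def by blast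
  define ntr where "ntr = (\<lambda>a j x. R a j x \<or> (j = i' \<and> (\<exists>y\<in>M i. R a i y \<and> x = E i i' y)))"
  have sub: "\<forall>a\<in>L. \<forall>j x. R a j x \<longrightarrow> ntr a j x" unfolding ntr_def by blast
  have wt: "\<forall>a\<in>L. \<forall>j x. ntr a j x \<longrightarrow> j \<in> I \<and> x \<in> M j"
    unfolding ntr_def using twt[OF tl] emb_in ii by blast
  have coh: "T j' j x' x" if aL: "a\<in>L" and jj: "j\<in>I" "j'\<in>I" "le j j'" and xx: "x'\<in>M j'" "x\<in>M j"
     and n1: "ntr a j' x'" and n2: "ntr a j x" for a j j' x' x
  proof -
    consider (A) "R a j' x'" "R a j x"
      | (B) y where "R a j' x'" "j = i'" "y\<in>M i" "R a i y" "x = E i i' y"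
      | (C) y where "j' = i'" "y\<in>M i" "R a i y" "x' = E i i' y" "R a j x"
      | (D) y y' where "j' = i'" "y'\<in>M i" "R a i y'" "x' = E i i' y'" "j = i'" "y\<in>M i" "R a i y" "x = E i i' y"
      using n1 n2 unfolding ntr_def by blast
    then show ?thesis
    proof cases
      case A then show ?thesis using tcoh[OF tl aL jj xx] by blast
    next
      case (B y)
      have ij': "le i j'" using le_trans[OF ii(1,2) jj(2) ii(3)] jj B by simp
      have "T j' i x' y" using tcoh[OF tl aL ii(1) jj(2) ij' xx(1) B(3) B(1) B(4)] .
      then have s1: "sm j' x' j' (E i j' y)" using dirT[OF dir ii(1) jj(2) ij' xx(1) B(3)] by simp
      have u: "E i i' y \<in> M i'" using emb_in ii B by blast
      have s2: "sm j' (E i' j' (E i i' y)) j' (E i j' y)"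
        using emb_comp[OF ii(1,2) jj(2) ii(3)] jj B by simp
      have "sm j' x' j' (E i' j' (E i i' y))"
        using sim_trans[OF jj(2) xx(1) _ _ s1 sim_sym[OF s2]] emb_in[OF ii(2) jj(2)] emb_in[OF ii(1) jj(2) ij'] u B jj
        by simp
      then show ?thesis using dirT[OF dir ii(2) jj(2) _ xx(1) u] jj B by simp
    next
      case (C y)
      obtain k z where k: "k\<in>I" "le i' k" "z\<in>M k" "R a k z"
        using cofinal_ltr[OF fa tl aL ii(2)] by blast
      have ik: "le i k" using le_trans[OF ii(1,2) k(1) ii(3) k(2)] .
      have jk: "le j k" using le_trans[OF jj(1,2) k(1) jj(3)] k C by simp
      have "T k j z x" using tcoh[OF tl aL jj(1) k(1) jk k(3) xx(2) k(4) C(5)] .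
      then have s1: "sm k z k (E j k x)" using dirT[OF dir jj(1) k(1) jk k(3) xx(2)] by simp
      have "T k i z y" using tcoh[OF tl aL ii(1) k(1) ik k(3) C(2) k(4) C(3)] .
      then have s2: "sm k z k (E i k y)" using dirT[OF dir ii(1) k(1) ik k(3) C(2)] by simp
      have ji': "le j i'" using jj C by simp
      define u where "u = E i i' y"
      define w where "w = E j i' x"
      have u: "u \<in> M i'" unfolding u_def using emb_in ii C by blast
      have w: "w \<in> M i'" unfolding w_def using emb_in[OF jj(1) ii(2) ji' xx(2)] .
      have Ey: "E i k y \<in> M k" using emb_in[OF ii(1) k(1) ik C(2)] .
      have Ex: "E j k x \<in> M k" using emb_in[OF jj(1) k(1) jk xx(2)] .
      have Eu: "E i' k u \<in> M k" using emb_in[OF ii(2) k(1) k(2) u] .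
      have Ew: "E i' k w \<in> M k" using emb_in[OF ii(2) k(1) k(2) w] .
      have s3: "sm k (E i k y) k (E j k x)"
        using sim_trans[OF k(1) Ey k(3) Ex sim_sym[OF s2] s1] .
      have s4: "sm k (E i' k u) k (E i k y)" unfolding u_def using emb_comp[OF ii(1,2) k(1) ii(3) k(2) C(2)] .
      have s5: "sm k (E i' k w) k (E j k x)" unfolding w_def using emb_comp[OF jj(1) ii(2) k(1) ji' k(2) xx(2)] .
      have s6: "sm k (E i' k u) k (E i' k w)"
        using sim_trans[OF k(1) Eu Ey Ew s4 sim_trans[OF k(1) Ey Ex Ew s3 sim_sym[OF s5]]] .
      have s7: "sm i' (P k i' (E i' k u)) i' (P k i' (E i' k w))" using prj_sim[OF ii(2) k(1) k(2) Eu Ew s6] .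
      have p1: "sm i' (P k i' (E i' k u)) i' u" using prj_emb[OF ii(2) k(1) k(2) u] .
      have p2: "sm i' (P k i' (E i' k w)) i' w" using prj_emb[OF ii(2) k(1) k(2) w] .
      have Pu: "P k i' (E i' k u) \<in> M i'" using prj_in[OF ii(2) k(1) k(2) Eu] .
      have Pw: "P k i' (E i' k w) \<in> M i'" using prj_in[OF ii(2) k(1) k(2) Ew] .
      have "sm i' u i' w" using sim_trans[OF ii(2) u Pu w sim_sym[OF p1] sim_trans[OF ii(2) Pu Pw w s7 p2]] .
      then show ?thesis using dirT[OF dir jj(1) ii(2) ji' u xx(2)] C unfolding u_def w_def by simp
    next
      case (D y y')
      have "T i i y' y" using tcoh[OF tl aL ii(1) ii(1) le_refl[OF ii(1)] D(2) D(6) D(3) D(7)] .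
      then have "sm i y' i y" using sim_same[OF ii(1) D(2) D(6)] by simp
      then have "sm i' (E i i' y') i' (E i i' y)" using emb_sim[OF ii D(2) D(6)] by blast
      then show ?thesis using sim_same[OF ii(2) emb_in[OF ii D(2)] emb_in[OF ii D(6)]] D by simp
    qed
  qed
  have "target F I le M T L ntr" by (rule target_intro[OF fa tl sub wt coh]) blast+
  moreover have "ntr a0 i' (E i i' x0)" unfolding ntr_def using a0 by blast
  ultimately show ?thesis using lim_extend[OF lim _ sub a0(1)] by blast
qed


lemma lim_inverse:
  assumes fa: "filter_assignment F" and inv: "inverse_fs I le M T E P" and lim: "is_limit F I le M T L R"
    and ii: "i\<in>I" "i'\<in>I" "le i i'" and a0: "a0\<in>L" "x0\<in>M i'" "R a0 i' x0"
  shows "R a0 i (P i' i x0)"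
proof -
  have tl: "target F I le M T L R" using lim unfolding is_limit_def by blast
  define ntr where "ntr = (\<lambda>a j x. R a j x \<or> (j = i \<and> (\<exists>y\<in>M i'. R a i' y \<and> x = P i' i y)))"
  have sub: "\<forall>a\<in>L. \<forall>j x. R a j x \<longrightarrow> ntr a j x" unfolding ntr_def by blast
  have wt: "\<forall>a\<in>L. \<forall>j x. ntr a j x \<longrightarrow> j \<in> I \<and> x \<in> M j"
    unfolding ntr_def using twt[OF tl] prj_in ii by blast
  have coh: "T j' j x' x" if aL: "a\<in>L" and jj: "j\<in>I" "j'\<in>I" "le j j'" and xx: "x'\<in>M j'" "x\<in>M j"
     and n1: "ntr a j' x'" and n2: "ntr a j x" for a j j' x' x
  proof -
    consider (A) "R a j' x'" "R a j x"
      | (B) y where "R a j' x'" "j = i" "y\<in>M i'" "R a i' y" "x = P i' i y"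
      | (C) y where "j' = i" "y\<in>M i'" "R a i' y" "x' = P i' i y" "R a j x"
      | (D) y y' where "j' = i" "y'\<in>M i'" "R a i' y'" "x' = P i' i y'" "j = i" "y\<in>M i'" "R a i' y" "x = P i' i y"
      using n1 n2 unfolding ntr_def by blast
    then show ?thesis
    proof cases
      case A then show ?thesis using tcoh[OF tl aL jj xx] by blast
    next
      case (B y)
      have ij': "le i j'" using jj B by simp
      obtain m where m: "m\<in>I" "le j' m" "le i' m" using upper[OF jj(2) ii(2)] by blast
      obtain k z where k: "k\<in>I" "le m k" "z\<in>M k" "R a k z"
        using cofinal_ltr[OF fa tl aL m(1)] by blast
      have j'k: "le j' k" using le_trans[OF jj(2) m(1) k(1) m(2) k(2)] .
      have i'k: "le i' k" using le_trans[OF ii(2) m(1) k(1) m(3) k(2)] .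
      have ik: "le i k" using le_trans[OF ii(1,2) k(1) ii(3) i'k] .
      have "T k j' z x'" using tcoh[OF tl aL jj(2) k(1) j'k k(3) xx(1) k(4) B(1)] .
      then have s1: "sm j' (P k j' z) j' x'" using invT[OF inv jj(2) k(1) j'k k(3) xx(1)] by simp
      have "T k i' z y" using tcoh[OF tl aL ii(2) k(1) i'k k(3) B(3) k(4) B(4)] .
      then have s2: "sm i' (P k i' z) i' y" using invT[OF inv ii(2) k(1) i'k k(3) B(3)] by simp
      have Pz1: "P k j' z \<in> M j'" using prj_in[OF jj(2) k(1) j'k k(3)] .
      have Pz2: "P k i' z \<in> M i'" using prj_in[OF ii(2) k(1) i'k k(3)] .
      have Pz: "P k i z \<in> M i" using prj_in[OF ii(1) k(1) ik k(3)] .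
      have q1: "P j' i (P k j' z) \<in> M i" using prj_in[OF ii(1) jj(2) ij' Pz1] .
      have q2: "P j' i x' \<in> M i" using prj_in[OF ii(1) jj(2) ij' xx(1)] .
      have q3: "P i' i (P k i' z) \<in> M i" using prj_in[OF ii Pz2] .
      have q4: "P i' i y \<in> M i" using prj_in[OF ii B(3)] .
      have t1: "sm i (P j' i (P k j' z)) i (P j' i x')" using prj_sim[OF ii(1) jj(2) ij' Pz1 xx(1) s1] .
      have t2: "sm i (P j' i (P k j' z)) i (P k i z)" using prj_comp[OF ii(1) jj(2) k(1) ij' j'k k(3)] .
      have t3: "sm i (P i' i (P k i' z)) i (P i' i y)" using prj_sim[OF ii Pz2 B(3) s2] .
      have t4: "sm i (P i' i (P k i' z)) i (P k i z)" using prj_comp[OF ii(1,2) k(1) ii(3) i'k k(3)] .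
      have t5: "sm i (P j' i x') i (P k i z)" using sim_trans[OF ii(1) q2 q1 Pz sim_sym[OF t1] t2] .
      have t6: "sm i (P k i z) i (P i' i y)" using sim_trans[OF ii(1) Pz q3 q4 sim_sym[OF t4] t3] .
      have "sm i (P j' i x') i (P i' i y)" using sim_trans[OF ii(1) q2 Pz q4 t5 t6] .
      then show ?thesis using invT[OF inv ii(1) jj(2) ij' xx(1) q4] B by simp
    next
      case (C y)
      have ji: "le j i" using jj C by simp
      have ji': "le j i'" using le_trans[OF jj(1) ii(1,2) ji ii(3)] .
      have "T i' j y x" using tcoh[OF tl aL jj(1) ii(2) ji' C(2) xx(2) C(3) C(5)] .
      then have s1: "sm j (P i' j y) j x" using invT[OF inv jj(1) ii(2) ji' C(2) xx(2)] by simp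
      have Py: "P i' i y \<in> M i" using prj_in[OF ii C(2)] .
      have s2: "sm j (P i j (P i' i y)) j (P i' j y)" using prj_comp[OF jj(1) ii(1,2) ji ii(3) C(2)] .
      have "sm j (P i j (P i' i y)) j x"
        using sim_trans[OF jj(1) prj_in[OF jj(1) ii(1) ji Py] prj_in[OF jj(1) ii(2) ji' C(2)] xx(2) s2 s1] .
      then show ?thesis using invT[OF inv jj(1) ii(1) ji Py xx(2)] C by simp
    next
      case (D y y')
      have "T i' i' y' y" using tcoh[OF tl aL ii(2) ii(2) le_refl[OF ii(2)] D(2) D(6) D(3) D(7)] .
      then have "sm i' y' i' y" using sim_same[OF ii(2) D(2) D(6)] by simp
      then have "sm i (P i' i y') i (P i' i y)" using prj_sim[OF ii D(2) D(6)] by blast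
      then show ?thesis using sim_same[OF ii(1) prj_in[OF ii D(2)] prj_in[OF ii D(6)]] D by simp
    qed
  qed
  have "target F I le M T L ntr" by (rule target_intro[OF fa tl sub wt coh]) blast+
  moreover have "ntr a0 i (P i' i x0)" unfolding ntr_def using a0 by blast
  ultimately show ?thesis using lim_extend[OF lim _ sub a0(1)] by blast
qed

lemma direct_single:
  assumes "\<And>j j'. j\<in>I \<Longrightarrow> j'\<in>I \<Longrightarrow> le j j' \<Longrightarrow> j = j'"
  shows "direct I le M T E P"
  unfolding direct_def
proof (intro conjI fs ballI impI)
  fix j j' a' a assume h: "j\<in>I" "j'\<in>I" "le j j'" "a'\<in>M j'" "a\<in>M j"
  have e: "j' = j" using assms[OF h(1-3)] by simp
  have s: "sm j (E j j a) j a" using emb_id h(1,5) .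
  have Ea: "E j j a \<in> M j" using emb_in[OF h(1) h(1) le_refl[OF h(1)] h(5)] .
  have "T j j a' a \<longleftrightarrow> sm j a' j a" using sim_same[OF h(1) _ h(5)] h e by simp
  also have "\<dots> \<longleftrightarrow> sm j a' j (E j j a)"
    using sim_trans[OF h(1) _ Ea h(5) _ s] sim_trans[OF h(1) _ h(5) Ea _ sim_sym[OF s]] h e by blast
  finally show "T j' j a' a \<longleftrightarrow> sm j' a' j' (E j j' a)" using e by simp
qed

lemma inverse_single:
  assumes "\<And>j j'. j\<in>I \<Longrightarrow> j'\<in>I \<Longrightarrow> le j j' \<Longrightarrow> j = j'"
  shows "inverse_fs I le M T E P"
  unfolding inverse_fs_def
proof (intro conjI fs ballI impI)
  fix j j' a' a assume h: "j\<in>I" "j'\<in>I" "le j j'" "a'\<in>M j'" "a\<in>M j"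
  have e: "j' = j" using assms[OF h(1-3)] by simp
  have a': "a' \<in> M j" using h e by simp
  have s: "sm j (P j j a') j a'" using prj_id h(1) a' .
  have Pa: "P j j a' \<in> M j" using prj_in[OF h(1) h(1) le_refl[OF h(1)] a'] .
  have "T j j a' a \<longleftrightarrow> sm j a' j a" using sim_same[OF h(1) a' h(5)] by simp
  also have "\<dots> \<longleftrightarrow> sm j (P j j a') j a"
    using sim_trans[OF h(1) Pa a' h(5) s] sim_trans[OF h(1) a' Pa h(5) sim_sym[OF s]] by blast
  finally show "T j' j a' a \<longleftrightarrow> sm j (P j' j a') j a" using e by simp
qed

end


context
  fixes F :: "'a ix set \<Rightarrow> ('a ix \<Rightarrow> 'a ix \<Rightarrow> bool) \<Rightarrow> 'a ix set set"
    and J :: "('a, 'b, 'v) interp"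
  assumes it: "interpretation_of_types F J"
begin

lemma IT_fs: "fsys (I\<^sub>T J \<rho>) (le\<^sub>T J \<rho>) (st J \<rho>) (tr J \<rho>) (emb J \<rho>) (prj J \<rho>)"
proof -
  have "\<forall>\<rho>. factor_system (I\<^sub>T J \<rho>) (le\<^sub>T J \<rho>) (st J \<rho>) (tr J \<rho>) (emb J \<rho>) (prj J \<rho>)"
    using it unfolding interpretation_of_types_def by (elim conjE)
  then show ?thesis unfolding fsys_def by blast
qed

lemma IT_lim: "is_limit F (I\<^sub>T J \<rho>) (le\<^sub>T J \<rho>) (st J \<rho>) (tr J \<rho>) (lim J \<rho>) (ltr J \<rho>)"
proof -
  have "\<forall>\<rho>. is_limit F (I\<^sub>T J \<rho>) (le\<^sub>T J \<rho>) (st J \<rho>) (tr J \<rho>) (lim J \<rho>) (ltr J \<rho>)"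
    using it unfolding interpretation_of_types_def by (elim conjE)
  then show ?thesis by blast
qed

lemma IT_base: "direct (I\<^sub>T J (Base b)) (le\<^sub>T J (Base b)) (st J (Base b)) (tr J (Base b))
                 (emb J (Base b)) (prj J (Base b))"
proof -
  have "\<forall>b. direct (I\<^sub>T J (Base b)) (le\<^sub>T J (Base b)) (st J (Base b)) (tr J (Base b))
                 (emb J (Base b)) (prj J (Base b))"
    using it unfolding interpretation_of_types_def by (elim conjE)
  then show ?thesis by blast
qed

lemma IT_arr0: "\<forall>r s. \<forall>i\<in>I\<^sub>T J r. \<forall>i'\<in>I\<^sub>T J r. \<forall>j\<in>I\<^sub>T J s. \<forall>j'\<in>I\<^sub>T J s.
        le\<^sub>T J r i i' \<and> le\<^sub>T J s j j' \<longrightarrow>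
        (\<forall>f'\<in>st J (Arr r s) (IPair i' j'). \<forall>f\<in>st J (Arr r s) (IPair i j).
           tr J (Arr r s) (IPair i' j') (IPair i j) f' f \<longleftrightarrow>
           (\<forall>a'\<in>st J r i'. \<forall>a\<in>st J r i. tr J r i' i a' a \<longrightarrow> tr J s j' j (app J f' a') (app J f a))) \<and>
        (\<forall>f\<in>st J (Arr r s) (IPair i j).
           emb J (Arr r s) (IPair i j) (IPair i' j') f \<in> st J (Arr r s) (IPair i' j') \<and>
           (\<forall>a\<in>st J r i'. app J (emb J (Arr r s) (IPair i j) (IPair i' j') f) a
                            = emb J s j j' (app J f (prj J r i' i a)))) \<and>
        (\<forall>f'\<in>st J (Arr r s) (IPair i' j').
           prj J (Arr r s) (IPair i' j') (IPair i j) f' \<in> st J (Arr r s) (IPair i j) \<and>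
           (\<forall>a\<in>st J r i. app J (prj J (Arr r s) (IPair i' j') (IPair i j) f') a
                            = prj J s j' j (app J f' (emb J r i i' a))))"
  using it unfolding interpretation_of_types_def by (elim conjE)

lemma IT_bij0: "\<forall>r s. \<forall>i\<in>I\<^sub>T J r. \<forall>j\<in>I\<^sub>T J s.
        bij_betw (\<lambda>v. restrict (app J v) (st J r i)) (st J (Arr r s) (IPair i j)) (sim_pres J r s i j)"
  using it unfolding interpretation_of_types_def by (elim conjE)

lemma IT_app:
  assumes "i\<in>I\<^sub>T J r" "j\<in>I\<^sub>T J s" "f\<in>st J (Arr r s) (IPair i j)"
  shows "\<forall>a\<in>st J r i. app J f a \<in> st J s j"
    "\<forall>a\<in>st J r i. \<forall>b\<in>st J r i. sim\<^sub>T J r i a i b \<longrightarrow> sim\<^sub>T J s j (app J f a) j (app J f b)"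
proof -
  have "restrict (app J f) (st J r i) \<in> sim_pres J r s i j"
    using IT_bij0 assms bij_betw_imp_funcset by (metis funcset_mem)
  then show "\<forall>a\<in>st J r i. app J f a \<in> st J s j"
    "\<forall>a\<in>st J r i. \<forall>b\<in>st J r i. sim\<^sub>T J r i a i b \<longrightarrow> sim\<^sub>T J s j (app J f a) j (app J f b)"
    unfolding sim_pres_def by auto
qed

lemma IT_tr:
  assumes "i\<in>I\<^sub>T J r" "i'\<in>I\<^sub>T J r" "j\<in>I\<^sub>T J s" "j'\<in>I\<^sub>T J s" "le\<^sub>T J r i i'" "le\<^sub>T J s j j'"
    "f'\<in>st J (Arr r s) (IPair i' j')" "f\<in>st J (Arr r s) (IPair i j)"
  shows "tr J (Arr r s) (IPair i' j') (IPair i j) f' f \<longleftrightarrow>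
           (\<forall>a'\<in>st J r i'. \<forall>a\<in>st J r i. tr J r i' i a' a \<longrightarrow> tr J s j' j (app J f' a') (app J f a))"
  using IT_arr0[rule_format, OF assms(1-4) conjI[OF assms(5,6)], THEN conjunct1, rule_format, OF assms(7,8)] .

lemma IT_emb:
  assumes "i\<in>I\<^sub>T J r" "i'\<in>I\<^sub>T J r" "j\<in>I\<^sub>T J s" "j'\<in>I\<^sub>T J s" "le\<^sub>T J r i i'" "le\<^sub>T J s j j'"
    "f\<in>st J (Arr r s) (IPair i j)" "a\<in>st J r i'"
  shows "app J (emb J (Arr r s) (IPair i j) (IPair i' j') f) a = emb J s j j' (app J f (prj J r i' i a))"
  using IT_arr0[rule_format, OF assms(1-4) conjI[OF assms(5,6)], THEN conjunct2, THEN conjunct1, rule_format, OF assms(7), THEN conjunct2, rule_format, OF assms(8)] .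

lemma IT_prj:
  assumes "i\<in>I\<^sub>T J r" "i'\<in>I\<^sub>T J r" "j\<in>I\<^sub>T J s" "j'\<in>I\<^sub>T J s" "le\<^sub>T J r i i'" "le\<^sub>T J s j j'"
    "f'\<in>st J (Arr r s) (IPair i' j')" "a\<in>st J r i"
  shows "app J (prj J (Arr r s) (IPair i' j') (IPair i j) f') a = prj J s j' j (app J f' (emb J r i i' a))"
  using IT_arr0[rule_format, OF assms(1-4) conjI[OF assms(5,6)], THEN conjunct2, THEN conjunct2, rule_format, OF assms(7), THEN conjunct2, rule_format, OF assms(8)] .


lemma arr_idx:
  assumes "k \<in> I\<^sub>T J (Arr r s)"
  obtains i j where "k = IPair i j" "i \<in> I\<^sub>T J r" "j \<in> I\<^sub>T J s"
  using assms by (auto simp: pair_set_def)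

lemma arr_direct:
  assumes invr: "inverse_fs (I\<^sub>T J r) (le\<^sub>T J r) (st J r) (tr J r) (emb J r) (prj J r)"
   and dirs: "direct (I\<^sub>T J s) (le\<^sub>T J s) (st J s) (tr J s) (emb J s) (prj J s)"
  shows "direct (I\<^sub>T J (Arr r s)) (le\<^sub>T J (Arr r s)) (st J (Arr r s)) (tr J (Arr r s)) (emb J (Arr r s)) (prj J (Arr r s))"
proof -
  interpret R: fsys "I\<^sub>T J r" "le\<^sub>T J r" "st J r" "tr J r" "emb J r" "prj J r" by (rule IT_fs)
  interpret S: fsys "I\<^sub>T J s" "le\<^sub>T J s" "st J s" "tr J s" "emb J s" "prj J s" by (rule IT_fs)
  interpret A: fsys "I\<^sub>T J (Arr r s)" "le\<^sub>T J (Arr r s)" "st J (Arr r s)" "tr J (Arr r s)" "emb J (Arr r s)" "prj J (Arr r s)" by (rule IT_fs)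
  show ?thesis unfolding direct_def
  proof (intro conjI A.fs ballI impI)
    fix k k' f' f assume k: "k \<in> I\<^sub>T J (Arr r s)" "k' \<in> I\<^sub>T J (Arr r s)" "le\<^sub>T J (Arr r s) k k'"
      "f' \<in> st J (Arr r s) k'" "f \<in> st J (Arr r s) k"
    obtain i j where ij: "k = IPair i j" "i \<in> I\<^sub>T J r" "j \<in> I\<^sub>T J s" using k(1) by (rule arr_idx)
    obtain i' j' where ij': "k' = IPair i' j'" "i' \<in> I\<^sub>T J r" "j' \<in> I\<^sub>T J s" using k(2) by (rule arr_idx)
    have le: "le\<^sub>T J r i i'" "le\<^sub>T J s j j'" using k(3) ij ij' by simp_all
    have f': "f' \<in> st J (Arr r s) (IPair i' j')" using k ij' by simp
    have f: "f \<in> st J (Arr r s) (IPair i j)" using k ij by simp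
    define Ef where "Ef = emb J (Arr r s) (IPair i j) (IPair i' j') f"
    have Ef: "Ef \<in> st J (Arr r s) (IPair i' j')" unfolding Ef_def using A.emb_in k ij ij' by blast
    have appEf: "app J Ef a = emb J s j j' (app J f (prj J r i' i a))" if "a \<in> st J r i'" for a
      unfolding Ef_def using IT_emb[OF ij(2) ij'(2) ij(3) ij'(3) le f that] .
    have f'app: "\<forall>a\<in>st J r i'. app J f' a \<in> st J s j'" using IT_app[OF ij'(2,3) f'] by blast
    have fapp: "\<forall>a\<in>st J r i. app J f a \<in> st J s j" using IT_app[OF ij(2,3) f] by blast
    have fsim: "\<forall>a\<in>st J r i. \<forall>b\<in>st J r i. sim\<^sub>T J r i a i b \<longrightarrow> sim\<^sub>T J s j (app J f a) j (app J f b)"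
      using IT_app[OF ij(2,3) f] by blast
    have "A.sm (IPair i' j') f' (IPair i' j') Ef \<longleftrightarrow> tr J (Arr r s) (IPair i' j') (IPair i' j') f' Ef"
      using A.sim_same ij' k Ef f' by blast
    also have "\<dots> \<longleftrightarrow> (\<forall>a'\<in>st J r i'. \<forall>a\<in>st J r i'. tr J r i' i' a' a \<longrightarrow>
         tr J s j' j' (app J f' a') (emb J s j j' (app J f (prj J r i' i a))))"
      using IT_tr[OF ij'(2) ij'(2) ij'(3) ij'(3) R.le_refl[OF ij'(2)] S.le_refl[OF ij'(3)] f' Ef] appEf
      by simp
    also have "\<dots> \<longleftrightarrow> (\<forall>a'\<in>st J r i'. \<forall>a\<in>st J r i. tr J r i' i a' a \<longrightarrow> tr J s j' j (app J f' a') (app J f a))"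
    proof
      assume G: "\<forall>a'\<in>st J r i'. \<forall>a\<in>st J r i'. tr J r i' i' a' a \<longrightarrow>
         tr J s j' j' (app J f' a') (emb J s j j' (app J f (prj J r i' i a)))"
      show "\<forall>a'\<in>st J r i'. \<forall>a\<in>st J r i. tr J r i' i a' a \<longrightarrow> tr J s j' j (app J f' a') (app J f a)"
      proof (intro ballI impI)
        fix a' a assume a': "a' \<in> st J r i'" and a: "a \<in> st J r i" and t: "tr J r i' i a' a"
        have pa': "prj J r i' i a' \<in> st J r i" using R.prj_in[OF ij(2) ij'(2) le(1) a'] .
        have s1: "sim\<^sub>T J r i (prj J r i' i a') i a" using R.invT[OF invr ij(2) ij'(2) le(1) a' a] t by simp
        have x1: "app J f' a' \<in> st J s j'" using f'app a' by blast
        have x2: "app J f (prj J r i' i a') \<in> st J s j" using fapp pa' by blast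
        have x3: "app J f a \<in> st J s j" using fapp a by blast
        have "tr J s j' j' (app J f' a') (emb J s j j' (app J f (prj J r i' i a')))"
          using G a' R.T_refl[OF ij'(2) a'] by blast
        then have s2: "sim\<^sub>T J s j' (app J f' a') j' (emb J s j j' (app J f (prj J r i' i a')))"
          using S.sim_same[OF ij'(3) x1 S.emb_in[OF ij(3) ij'(3) le(2) x2]] by simp
        have s3: "sim\<^sub>T J s j (app J f (prj J r i' i a')) j (app J f a)" using fsim pa' a s1 by blast
        have s4: "sim\<^sub>T J s j' (emb J s j j' (app J f (prj J r i' i a'))) j' (emb J s j j' (app J f a))"
          using S.emb_sim[OF ij(3) ij'(3) le(2) x2 x3 s3] .
        have "sim\<^sub>T J s j' (app J f' a') j' (emb J s j j' (app J f a))"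
          using S.sim_trans[OF ij'(3) x1 S.emb_in[OF ij(3) ij'(3) le(2) x2] S.emb_in[OF ij(3) ij'(3) le(2) x3] s2 s4] .
        then show "tr J s j' j (app J f' a') (app J f a)"
          using S.dirT[OF dirs ij(3) ij'(3) le(2) x1 x3] by simp
      qed
    next
      assume H: "\<forall>a'\<in>st J r i'. \<forall>a\<in>st J r i. tr J r i' i a' a \<longrightarrow> tr J s j' j (app J f' a') (app J f a)"
      show "\<forall>a'\<in>st J r i'. \<forall>a\<in>st J r i'. tr J r i' i' a' a \<longrightarrow>
         tr J s j' j' (app J f' a') (emb J s j j' (app J f (prj J r i' i a)))"
      proof (intro ballI impI)
        fix a' a assume a': "a' \<in> st J r i'" and a: "a \<in> st J r i'" and t: "tr J r i' i' a' a"
        have pa: "prj J r i' i a \<in> st J r i" using R.prj_in[OF ij(2) ij'(2) le(1) a] .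
        have pa': "prj J r i' i a' \<in> st J r i" using R.prj_in[OF ij(2) ij'(2) le(1) a'] .
        have "sim\<^sub>T J r i' a' i' a" using R.sim_same[OF ij'(2) a' a] t by simp
        then have "sim\<^sub>T J r i (prj J r i' i a') i (prj J r i' i a)" using R.prj_sim[OF ij(2) ij'(2) le(1) a' a] by simp
        then have "tr J r i' i a' (prj J r i' i a)" using R.invT[OF invr ij(2) ij'(2) le(1) a' pa] by simp
        then have t2: "tr J s j' j (app J f' a') (app J f (prj J r i' i a))" using H a' pa by blast
        have x1: "app J f' a' \<in> st J s j'" using f'app a' by blast
        have x2: "app J f (prj J r i' i a) \<in> st J s j" using fapp pa by blast
        have "sim\<^sub>T J s j' (app J f' a') j' (emb J s j j' (app J f (prj J r i' i a)))"
          using S.dirT[OF dirs ij(3) ij'(3) le(2) x1 x2] t2 by simp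
        then show "tr J s j' j' (app J f' a') (emb J s j j' (app J f (prj J r i' i a)))"
          using S.sim_same[OF ij'(3) x1 S.emb_in[OF ij(3) ij'(3) le(2) x2]] by simp
      qed
    qed
    also have "\<dots> \<longleftrightarrow> tr J (Arr r s) (IPair i' j') (IPair i j) f' f"
      using IT_tr[OF ij(2) ij'(2) ij(3) ij'(3) le f' f] by simp
    finally show "tr J (Arr r s) k' k f' f \<longleftrightarrow> A.sm k' f' k' (emb J (Arr r s) k k' f)"
      using ij ij' Ef_def by simp
  qed
qed


lemma arr_inverse:
  assumes dirr: "direct (I\<^sub>T J r) (le\<^sub>T J r) (st J r) (tr J r) (emb J r) (prj J r)"
   and invs: "inverse_fs (I\<^sub>T J s) (le\<^sub>T J s) (st J s) (tr J s) (emb J s) (prj J s)"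
  shows "inverse_fs (I\<^sub>T J (Arr r s)) (le\<^sub>T J (Arr r s)) (st J (Arr r s)) (tr J (Arr r s)) (emb J (Arr r s)) (prj J (Arr r s))"
proof -
  interpret R: fsys "I\<^sub>T J r" "le\<^sub>T J r" "st J r" "tr J r" "emb J r" "prj J r" by (rule IT_fs)
  interpret S: fsys "I\<^sub>T J s" "le\<^sub>T J s" "st J s" "tr J s" "emb J s" "prj J s" by (rule IT_fs)
  interpret A: fsys "I\<^sub>T J (Arr r s)" "le\<^sub>T J (Arr r s)" "st J (Arr r s)" "tr J (Arr r s)" "emb J (Arr r s)" "prj J (Arr r s)" by (rule IT_fs)
  show ?thesis unfolding inverse_fs_def
  proof (intro conjI A.fs ballI impI)
    fix k k' f' f assume k: "k \<in> I\<^sub>T J (Arr r s)" "k' \<in> I\<^sub>T J (Arr r s)" "le\<^sub>T J (Arr r s) k k'"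
      "f' \<in> st J (Arr r s) k'" "f \<in> st J (Arr r s) k"
    obtain i j where ij: "k = IPair i j" "i \<in> I\<^sub>T J r" "j \<in> I\<^sub>T J s" using k(1) by (rule arr_idx)
    obtain i' j' where ij': "k' = IPair i' j'" "i' \<in> I\<^sub>T J r" "j' \<in> I\<^sub>T J s" using k(2) by (rule arr_idx)
    have le: "le\<^sub>T J r i i'" "le\<^sub>T J s j j'" using k(3) ij ij' by simp_all
    have f': "f' \<in> st J (Arr r s) (IPair i' j')" using k ij' by simp
    have f: "f \<in> st J (Arr r s) (IPair i j)" using k ij by simp
    define Pf where "Pf = prj J (Arr r s) (IPair i' j') (IPair i j) f'"
    have Pf: "Pf \<in> st J (Arr r s) (IPair i j)" unfolding Pf_def using A.prj_in k ij ij' by blast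
    have appPf: "app J Pf a = prj J s j' j (app J f' (emb J r i i' a))" if "a \<in> st J r i" for a
      unfolding Pf_def using IT_prj[OF ij(2) ij'(2) ij(3) ij'(3) le f' that] .
    have f'app: "\<forall>a\<in>st J r i'. app J f' a \<in> st J s j'" using IT_app[OF ij'(2,3) f'] by blast
    have f'sim: "\<forall>a\<in>st J r i'. \<forall>b\<in>st J r i'. sim\<^sub>T J r i' a i' b \<longrightarrow> sim\<^sub>T J s j' (app J f' a) j' (app J f' b)"
      using IT_app[OF ij'(2,3) f'] by blast
    have fapp: "\<forall>a\<in>st J r i. app J f a \<in> st J s j" using IT_app[OF ij(2,3) f] by blast
    have "A.sm (IPair i j) Pf (IPair i j) f \<longleftrightarrow> tr J (Arr r s) (IPair i j) (IPair i j) Pf f"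
      using A.sim_same ij k Pf f by blast
    also have "\<dots> \<longleftrightarrow> (\<forall>a'\<in>st J r i. \<forall>a\<in>st J r i. tr J r i i a' a \<longrightarrow>
         tr J s j j (prj J s j' j (app J f' (emb J r i i' a'))) (app J f a))"
      using IT_tr[OF ij(2) ij(2) ij(3) ij(3) R.le_refl[OF ij(2)] S.le_refl[OF ij(3)] Pf f] appPf
      by simp
    also have "\<dots> \<longleftrightarrow> (\<forall>a'\<in>st J r i'. \<forall>a\<in>st J r i. tr J r i' i a' a \<longrightarrow> tr J s j' j (app J f' a') (app J f a))"
    proof
      assume G: "\<forall>a'\<in>st J r i. \<forall>a\<in>st J r i. tr J r i i a' a \<longrightarrow>
         tr J s j j (prj J s j' j (app J f' (emb J r i i' a'))) (app J f a)"
      show "\<forall>a'\<in>st J r i'. \<forall>a\<in>st J r i. tr J r i' i a' a \<longrightarrow> tr J s j' j (app J f' a') (app J f a)"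
      proof (intro ballI impI)
        fix a' a assume a': "a' \<in> st J r i'" and a: "a \<in> st J r i" and t: "tr J r i' i a' a"
        have ea: "emb J r i i' a \<in> st J r i'" using R.emb_in[OF ij(2) ij'(2) le(1) a] .
        have s1: "sim\<^sub>T J r i' a' i' (emb J r i i' a)" using R.dirT[OF dirr ij(2) ij'(2) le(1) a' a] t by simp
        have x1: "app J f' a' \<in> st J s j'" using f'app a' by blast
        have x2: "app J f' (emb J r i i' a) \<in> st J s j'" using f'app ea by blast
        have x3: "app J f a \<in> st J s j" using fapp a by blast
        have px1: "prj J s j' j (app J f' a') \<in> st J s j" using S.prj_in[OF ij(3) ij'(3) le(2) x1] .
        have px2: "prj J s j' j (app J f' (emb J r i i' a)) \<in> st J s j" using S.prj_in[OF ij(3) ij'(3) le(2) x2] .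
        have s2: "sim\<^sub>T J s j' (app J f' a') j' (app J f' (emb J r i i' a))" using f'sim a' ea s1 by blast
        have s3: "sim\<^sub>T J s j (prj J s j' j (app J f' a')) j (prj J s j' j (app J f' (emb J r i i' a)))"
          using S.prj_sim[OF ij(3) ij'(3) le(2) x1 x2 s2] .
        have "tr J s j j (prj J s j' j (app J f' (emb J r i i' a))) (app J f a)"
          using G a R.T_refl[OF ij(2) a] by blast
        then have s4: "sim\<^sub>T J s j (prj J s j' j (app J f' (emb J r i i' a))) j (app J f a)"
          using S.sim_same[OF ij(3) px2 x3] by simp
        have "sim\<^sub>T J s j (prj J s j' j (app J f' a')) j (app J f a)"
          using S.sim_trans[OF ij(3) px1 px2 x3 s3 s4] .
        then show "tr J s j' j (app J f' a') (app J f a)"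
          using S.invT[OF invs ij(3) ij'(3) le(2) x1 x3] by simp
      qed
    next
      assume H: "\<forall>a'\<in>st J r i'. \<forall>a\<in>st J r i. tr J r i' i a' a \<longrightarrow> tr J s j' j (app J f' a') (app J f a)"
      show "\<forall>a'\<in>st J r i. \<forall>a\<in>st J r i. tr J r i i a' a \<longrightarrow>
         tr J s j j (prj J s j' j (app J f' (emb J r i i' a'))) (app J f a)"
      proof (intro ballI impI)
        fix a' a assume a': "a' \<in> st J r i" and a: "a \<in> st J r i" and t: "tr J r i i a' a"
        have ea': "emb J r i i' a' \<in> st J r i'" using R.emb_in[OF ij(2) ij'(2) le(1) a'] .
        have ea: "emb J r i i' a \<in> st J r i'" using R.emb_in[OF ij(2) ij'(2) le(1) a] .
        have "sim\<^sub>T J r i a' i a" using R.sim_same[OF ij(2) a' a] t by simp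
        then have "sim\<^sub>T J r i' (emb J r i i' a') i' (emb J r i i' a)" using R.emb_sim[OF ij(2) ij'(2) le(1) a' a] by simp
        then have "tr J r i' i (emb J r i i' a') a" using R.dirT[OF dirr ij(2) ij'(2) le(1) ea' a] by simp
        then have t2: "tr J s j' j (app J f' (emb J r i i' a')) (app J f a)" using H ea' a by blast
        have x1: "app J f' (emb J r i i' a') \<in> st J s j'" using f'app ea' by blast
        have x2: "app J f a \<in> st J s j" using fapp a by blast
        have "sim\<^sub>T J s j (prj J s j' j (app J f' (emb J r i i' a'))) j (app J f a)"
          using S.invT[OF invs ij(3) ij'(3) le(2) x1 x2] t2 by simp
        then show "tr J s j j (prj J s j' j (app J f' (emb J r i i' a'))) (app J f a)"
          using S.sim_same[OF ij(3) S.prj_in[OF ij(3) ij'(3) le(2) x1] x2] by simp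
      qed
    qed
    also have "\<dots> \<longleftrightarrow> tr J (Arr r s) (IPair i' j') (IPair i j) f' f"
      using IT_tr[OF ij(2) ij'(2) ij(3) ij'(3) le f' f] by simp
    finally show "tr J (Arr r s) k' k f' f \<longleftrightarrow> A.sm k (prj J (Arr r s) k' k f') k f"
      using ij ij' Pf_def by simp
  qed
qed

lemma dirinv:
  "(pos_ty \<rho> \<longrightarrow> direct (I\<^sub>T J \<rho>) (le\<^sub>T J \<rho>) (st J \<rho>) (tr J \<rho>) (emb J \<rho>) (prj J \<rho>)) \<and>
   (neg_ty \<rho> \<longrightarrow> inverse_fs (I\<^sub>T J \<rho>) (le\<^sub>T J \<rho>) (st J \<rho>) (tr J \<rho>) (emb J \<rho>) (prj J \<rho>))"
proof (induction \<rho>)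
  case Prop
  interpret R: fsys "I\<^sub>T J Prop" "le\<^sub>T J Prop" "st J Prop" "tr J Prop" "emb J Prop" "prj J Prop" by (rule IT_fs)
  have "\<And>j j'. j\<in>I\<^sub>T J Prop \<Longrightarrow> j'\<in>I\<^sub>T J Prop \<Longrightarrow> le\<^sub>T J Prop j j' \<Longrightarrow> j = j'" by simp
  then show ?case using R.direct_single R.inverse_single by blast
next
  case (Base b)
  then show ?case using IT_base by simp
next
  case (Arr r s)
  then show ?case using arr_direct arr_inverse by simp
qed

end

theorem lemma3p5:
  fixes F :: "'a ix set \<Rightarrow> ('a ix \<Rightarrow> 'a ix \<Rightarrow> bool) \<Rightarrow> 'a ix set set"
    and J :: "('a, 'b, 'v) interp"
    and \<rho> :: "'b sty" and i i' :: "'a ix"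
  assumes "filter_assignment F" and "condition_D F"
    and "interpretation_of_types F J"
    and "i \<in> I\<^sub>T J \<rho>" and "i' \<in> I\<^sub>T J \<rho>" and "le\<^sub>T J \<rho> i i'"
  shows "(pos_ty \<rho> \<longrightarrow>
            direct (I\<^sub>T J \<rho>) (le\<^sub>T J \<rho>) (st J \<rho>) (tr J \<rho>) (emb J \<rho>) (prj J \<rho>) \<and>
            (\<forall>a\<in>lim J \<rho>. \<forall>x\<in>st J \<rho> i. ltr J \<rho> a i x \<longrightarrow> ltr J \<rho> a i' (emb J \<rho> i i' x)))
       \<and> (neg_ty \<rho> \<longrightarrow>
            inverse_fs (I\<^sub>T J \<rho>) (le\<^sub>T J \<rho>) (st J \<rho>) (tr J \<rho>) (emb J \<rho>) (prj J \<rho>) \<and>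
            (\<forall>a\<in>lim J \<rho>. \<forall>x\<in>st J \<rho> i'. ltr J \<rho> a i' x \<longrightarrow> ltr J \<rho> a i (prj J \<rho> i' i x)))"
proof -
  interpret R: fsys "I\<^sub>T J \<rho>" "le\<^sub>T J \<rho>" "st J \<rho>" "tr J \<rho>" "emb J \<rho>" "prj J \<rho>"
    by (rule IT_fs[OF assms(3)])
  have di: "(pos_ty \<rho> \<longrightarrow> direct (I\<^sub>T J \<rho>) (le\<^sub>T J \<rho>) (st J \<rho>) (tr J \<rho>) (emb J \<rho>) (prj J \<rho>)) \<and>
   (neg_ty \<rho> \<longrightarrow> inverse_fs (I\<^sub>T J \<rho>) (le\<^sub>T J \<rho>) (st J \<rho>) (tr J \<rho>) (emb J \<rho>) (prj J \<rho>))"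
    by (rule dirinv[OF assms(3)])
  have lim: "is_limit F (I\<^sub>T J \<rho>) (le\<^sub>T J \<rho>) (st J \<rho>) (tr J \<rho>) (lim J \<rho>) (ltr J \<rho>)"
    by (rule IT_lim[OF assms(3)])
  have P: "direct (I\<^sub>T J \<rho>) (le\<^sub>T J \<rho>) (st J \<rho>) (tr J \<rho>) (emb J \<rho>) (prj J \<rho>) \<and>
            (\<forall>a\<in>lim J \<rho>. \<forall>x\<in>st J \<rho> i. ltr J \<rho> a i x \<longrightarrow> ltr J \<rho> a i' (emb J \<rho> i i' x))"
    if "pos_ty \<rho>"
  proof -
    have d: "direct (I\<^sub>T J \<rho>) (le\<^sub>T J \<rho>) (st J \<rho>) (tr J \<rho>) (emb J \<rho>) (prj J \<rho>)" using di that by blast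
    then show ?thesis using R.lim_direct[OF assms(1) d lim assms(4-6)] by blast
  qed
  have N: "inverse_fs (I\<^sub>T J \<rho>) (le\<^sub>T J \<rho>) (st J \<rho>) (tr J \<rho>) (emb J \<rho>) (prj J \<rho>) \<and>
            (\<forall>a\<in>lim J \<rho>. \<forall>x\<in>st J \<rho> i'. ltr J \<rho> a i' x \<longrightarrow> ltr J \<rho> a i (prj J \<rho> i' i x))"
    if "neg_ty \<rho>"
  proof -
    have d: "inverse_fs (I\<^sub>T J \<rho>) (le\<^sub>T J \<rho>) (st J \<rho>) (tr J \<rho>) (emb J \<rho>) (prj J \<rho>)" using di that by blast
    then show ?thesis using R.lim_inverse[OF assms(1) d lim assms(4-6)] by blast
  qed
  show ?thesis using P N by blast
qed

end
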